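(* Let $m\geq 13$ and $n\geq 13$ be integers. If $f$ is a signed Roman dominating function of minimum weight on $C_m\vee C_n$ such that $\sum_{y\in N_{C_m}[x]}f(y)<0$ for some $x\in V(C_m)$, then $\gamma_{sR}(C_m\vee C_n)\geq 3$.
   Context: $C_n$ denotes the cycle on $n$ vertices; in $C_m\vee C_n$ the vertex sets $V(C_m)$ and $V(C_n)$ are disjoint. For a graph $G=(V,E)$ and $x\in V$, $N_G[x]=\{x\}\cup\{y: xy\in E\}$ is the closed neighborhood (so $N_{C_m}[x]$ consists of $x$ and its two neighbors on the cycle $C_m$). A signed Roman dominating function (SRDF) on $G$ is a function $f:V\to\{-1,1,2\}$ such that (a) $\sum_{y\in N_G[x]}f(y)\geq 1$ for every $x\in V$, and (b) every vertex $x$ with $f(x)=-1$ is adjacent to at least one vertex $y$ with $f(y)=2$. The weight of $f$ is $\sum_{x\in V}f(x)$, and $\gamma_{sR}(G)$ is the minimum weight of an SRDF on $G$. The join $G_1\vee G_2$ of two graphs has vertex set $V(G_1)\cup V(G_2)$ (disjoint union) and edge set $E(G_1)\cup E(G_2)\cup\{uv: u\in V(G_1), v\in V(G_2)\}$. *)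

theory Defs
  imports Main
begin

text \<open>A (simple) graph is given by a vertex set V and a symmetric irreflexive
adjacency relation adj.\<close>

definition closed_nbhd :: "'a set \<Rightarrow> ('a \<Rightarrow> 'a \<Rightarrow> bool) \<Rightarrow> 'a \<Rightarrow> 'a set" where
  "closed_nbhd V adj x = {x} \<union> {y \<in> V. adj x y}"

definition is_srdf :: "'a set \<Rightarrow> ('a \<Rightarrow> 'a \<Rightarrow> bool) \<Rightarrow> ('a \<Rightarrow> int) \<Rightarrow> bool" where
  "is_srdf V adj f \<longleftrightarrow>
     (\<forall>x\<in>V. f x \<in> {-1, 1, 2}) \<and>
     (\<forall>x\<in>V. (\<Sum>y\<in>closed_nbhd V adj x. f y) \<ge> 1) \<and>
     (\<forall>x\<in>V. f x = -1 \<longrightarrow> (\<exists>y\<in>V. adj x y \<and> f y = 2))"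

definition weight :: "'a set \<Rightarrow> ('a \<Rightarrow> int) \<Rightarrow> int" where
  "weight V f = (\<Sum>x\<in>V. f x)"

definition gamma_sR :: "'a set \<Rightarrow> ('a \<Rightarrow> 'a \<Rightarrow> bool) \<Rightarrow> int" where
  "gamma_sR V adj = Min {weight V f | f. is_srdf V adj f}"

definition cycle_adj :: "nat \<Rightarrow> nat \<Rightarrow> nat \<Rightarrow> bool" where
  "cycle_adj m i j \<longleftrightarrow> i < m \<and> j < m \<and> (j = (i + 1) mod m \<or> i = (j + 1) mod m)"

definition join_V :: "nat \<Rightarrow> nat \<Rightarrow> (nat + nat) set" where
  "join_V m n = Inl ` {..<m} \<union> Inr ` {..<n}"

fun join_adj :: "nat \<Rightarrow> nat \<Rightarrow> nat + nat \<Rightarrow> nat + nat \<Rightarrow> bool" where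
  "join_adj m n (Inl i) (Inl j) = cycle_adj m i j"
| "join_adj m n (Inr i) (Inr j) = cycle_adj n i j"
| "join_adj m n (Inl i) (Inr j) = (i < m \<and> j < n)"
| "join_adj m n (Inr j) (Inl i) = (i < m \<and> j < n)"

end

theory Submission
  imports Defs
begin

lemma mod_succ: "y < n \<Longrightarrow> Suc y mod n = (if Suc y = n then 0 else Suc y)"
  by (auto simp: mod_if)

lemma mod_succ': "y < n \<Longrightarrow> (y + 1) mod n = (if Suc y = n then 0 else Suc y)"
  by (auto simp: mod_if)

lemma nb_eq:
  assumes "n \<ge> 3" "y < n"
  shows "closed_nbhd {..<n} (cycle_adj n) y
       = {y, if Suc y = n then 0 else Suc y, if y = 0 then n - 1 else y - 1}"
proof -
  have H: "cycle_adj n y z \<longleftrightarrow> (z = (if Suc y = n then 0 else Suc y) \<or> z = (if y = 0 then n - 1 else y - 1))"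
    if z: "z < n" for z
  proof -
    have "cycle_adj n y z \<longleftrightarrow> (z = (if Suc y = n then 0 else Suc y) \<or> y = (if Suc z = n then 0 else Suc z))"
      unfolding cycle_adj_def mod_succ'[OF assms(2)] mod_succ'[OF z] using z assms by simp
    also have "(y = (if Suc z = n then 0 else Suc z)) = (z = (if y = 0 then n - 1 else y - 1))"
      using z assms by auto
    finally show ?thesis .
  qed
  show ?thesis
  proof (rule set_eqI)
    fix z
    show "z \<in> closed_nbhd {..<n} (cycle_adj n) y \<longleftrightarrow> z \<in> {y, if Suc y = n then 0 else Suc y, if y = 0 then n - 1 else y - 1}"
      unfolding closed_nbhd_def using H assms by (cases "z < n") auto
  qed
qed

lemma nb_sum:
  assumes "n \<ge> 3" "y < n"
  shows "(\<Sum>z\<in>closed_nbhd {..<n} (cycle_adj n) y. g z)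
       = g y + g (if Suc y = n then 0 else Suc y) + g (if y = 0 then n - 1 else y - 1)"
  using assms by (simp add: nb_eq) (auto simp: algebra_simps)

lemma shift1: "(\<Sum>y<n. (g::nat\<Rightarrow>int) (if Suc y = n then 0 else Suc y)) = (\<Sum>y<n. g y)"
proof (cases n)
  case 0 then show ?thesis by simp
next
  case (Suc k)
  have "(\<Sum>y<Suc k. g (if Suc y = Suc k then 0 else Suc y)) = (\<Sum>y<k. g (if Suc y = Suc k then 0 else Suc y)) + g 0"
    by (simp add: sum.lessThan_Suc)
  also have "(\<Sum>y<k. g (if Suc y = Suc k then 0 else Suc y)) = (\<Sum>y<k. g (Suc y))"
    by (rule sum.cong) auto
  also have "(\<Sum>y<k. g (Suc y)) + g 0 = (\<Sum>y<Suc k. g y)" using sum.lessThan_Suc_shift[of g k] by simp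
  finally show ?thesis unfolding Suc .
qed

lemma shift2: "(\<Sum>y<n. (g::nat\<Rightarrow>int) (if y = 0 then n - 1 else y - 1)) = (\<Sum>y<n. g y)"
proof (cases n)
  case 0 then show ?thesis by simp
next
  case (Suc k)
  have "(\<Sum>y<Suc k. g (if y = 0 then Suc k - 1 else y - 1)) = g (if 0 = (0::nat) then Suc k - 1 else 0 - 1) + (\<Sum>y<k. g (if Suc y = 0 then Suc k - 1 else Suc y - 1))"
    by (rule sum.lessThan_Suc_shift)
  also have "\<dots> = g k + (\<Sum>y<k. g y)" by simp
  also have "\<dots> = (\<Sum>y<Suc k. g y)" by simp
  finally show ?thesis unfolding Suc .
qed

lemma triple_sum:
  assumes "n \<ge> 3"
  shows "(\<Sum>y<n. \<Sum>z\<in>closed_nbhd {..<n} (cycle_adj n) y. (g::nat\<Rightarrow>int) z) = 3 * (\<Sum>y<n. g y)"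
proof -
  have "(\<Sum>y<n. \<Sum>z\<in>closed_nbhd {..<n} (cycle_adj n) y. g z)
     = (\<Sum>y<n. g y + g (if Suc y = n then 0 else Suc y) + g (if y = 0 then n - 1 else y - 1))"
    using assms by (intro sum.cong) (auto simp: nb_sum)
  also have "\<dots> = 3 * (\<Sum>y<n. g y)"
    by (simp add: sum.distrib shift1 shift2)
  finally show ?thesis .
qed

lemma join_nb_l:
  assumes "x < m"
  shows "closed_nbhd (join_V m n) (join_adj m n) (Inl x)
       = Inl ` closed_nbhd {..<m} (cycle_adj m) x \<union> Inr ` {..<n}"
  using assms unfolding closed_nbhd_def join_V_def
  by (auto simp: cycle_adj_def)

lemma join_nb_r:
  assumes "y < n"
  shows "closed_nbhd (join_V m n) (join_adj m n) (Inr y)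
       = Inr ` closed_nbhd {..<n} (cycle_adj n) y \<union> Inl ` {..<m}"
  using assms unfolding closed_nbhd_def join_V_def
  by (auto simp: cycle_adj_def)

lemma fin_nb: "finite (closed_nbhd {..<n} (cycle_adj n) y)"
  unfolding closed_nbhd_def by auto

lemma sum_l:
  assumes "x < m"
  shows "(\<Sum>z\<in>closed_nbhd (join_V m n) (join_adj m n) (Inl x). f z)
     = (\<Sum>y\<in>closed_nbhd {..<m} (cycle_adj m) x. f (Inl y)) + (\<Sum>y<n. f (Inr y))"
  unfolding join_nb_l[OF assms]
  by (subst sum.union_disjoint) (auto simp: fin_nb sum.reindex)

lemma sum_r:
  assumes "y < n"
  shows "(\<Sum>z\<in>closed_nbhd (join_V m n) (join_adj m n) (Inr y). f z)
     = (\<Sum>x\<in>closed_nbhd {..<n} (cycle_adj n) y. f (Inr x)) + (\<Sum>x<m. f (Inl x))"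
  unfolding join_nb_r[OF assms]
  by (subst sum.union_disjoint) (auto simp: fin_nb sum.reindex)

lemma weight_eq: "weight (join_V m n) f = (\<Sum>x<m. f (Inl x)) + (\<Sum>y<n. f (Inr y))"
  unfolding weight_def join_V_def
  by (subst sum.union_disjoint) (auto simp: sum.reindex)

theorem mainTheorem7:
  fixes m n :: nat and f :: "nat + nat \<Rightarrow> int"
  assumes "m \<ge> 13" and "n \<ge> 13"
    and "is_srdf (join_V m n) (join_adj m n) f"
    and "weight (join_V m n) f = gamma_sR (join_V m n) (join_adj m n)"
    and "\<exists>x<m. (\<Sum>y\<in>closed_nbhd {..<m} (cycle_adj m) x. f (Inl y)) < 0"
  shows "gamma_sR (join_V m n) (join_adj m n) \<ge> 3"
proof -
  define A where "A = (\<Sum>x<m. f (Inl x))"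
  define B where "B = (\<Sum>y<n. f (Inr y))"
  have cond: "\<forall>v\<in>join_V m n. (\<Sum>z\<in>closed_nbhd (join_V m n) (join_adj m n) v. f z) \<ge> 1"
    using assms(3) unfolding is_srdf_def by blast
  obtain x where x: "x < m" "(\<Sum>y\<in>closed_nbhd {..<m} (cycle_adj m) x. f (Inl y)) < 0"
    using assms(5) by blast
  have "Inl x \<in> join_V m n" using x unfolding join_V_def by auto
  with cond sum_l[OF x(1), where n=n and f=f] x(2) have B2: "B \<ge> 2" unfolding B_def by force
  have "A + B \<ge> 3"
  proof (cases "A \<ge> 1")
    case True then show ?thesis using B2 by simp
  next
    case False
    have ge: "\<And>y. y < n \<Longrightarrow> (\<Sum>x\<in>closed_nbhd {..<n} (cycle_adj n) y. f (Inr x)) \<ge> 1 - A"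
    proof -
      fix y assume y: "y < n"
      have "Inr y \<in> join_V m n" using y unfolding join_V_def by auto
      with cond sum_r[OF y, where m=m and f=f] show "(\<Sum>x\<in>closed_nbhd {..<n} (cycle_adj n) y. f (Inr x)) \<ge> 1 - A"
        unfolding A_def by force
    qed
    have "(\<Sum>y<n. (1 - A)) \<le> (\<Sum>y<n. \<Sum>x\<in>closed_nbhd {..<n} (cycle_adj n) y. f (Inr x))"
      by (rule sum_mono) (use ge in auto)
    also have "\<dots> = 3 * B" unfolding B_def using assms(2) by (intro triple_sum) simp
    finally have "int n * (1 - A) \<le> 3 * B" by simp
    moreover have "int n * (1 - A) \<ge> 13 * (1 - A)"
      using False assms(2) by (intro mult_right_mono) auto
    ultimately have "13 - 13*A \<le> 3*B" by (simp add: algebra_simps)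
    then show ?thesis using False by linarith
  qed
  then show ?thesis using assms(4) weight_eq[of m n f] unfolding A_def B_def by simp
qed

end
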